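(* Let $F$ be a field, $M$ an $F$-algebra and $B$ a separable $F$-subalgebra of $M$. Then every first-order deformation $\varphi:B\to M$ is given by conjugation: there exists an invertible $a\in M$ such that $\varphi(b)=aba^{-1}$ for every $b\in B$. In particular, any such deformation extends to an automorphism of $M$ and fixes $B\cap Z(M)$ pointwise.
   Context: A first-order deformation of a subalgebra $B\subseteq M$ is an $F$-linear map $\varphi:B\to M$ such that $\delta=\varphi-\mathrm{id}$ satisfies $\delta(bc)=\delta(b)c+b\delta(c)$ and $\delta(b)\delta(c)=0$ for all $b,c\in B$. $B$ is separable if it admits a separating idempotent $e\in B\otimes_F B$ (image $1$ under multiplication and $(b\otimes1)e=e(1\otimes b)$ for all $b\in B$), equivalently $B$ is semisimple with étale center. $Z(M)$ is the center of $M$. *)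

theory Defs
  imports Complex_Main
begin

definition algebra_over :: "('f::field \<Rightarrow> 'm::ring_1 \<Rightarrow> 'm) \<Rightarrow> bool" where
  "algebra_over s \<longleftrightarrow> vector_space s \<and>
     (\<forall>c x y. s c (x * y) = s c x * y \<and> s c (x * y) = x * s c y)"

definition subalgebra :: "('f::field \<Rightarrow> 'm::ring_1 \<Rightarrow> 'm) \<Rightarrow> 'm set \<Rightarrow> bool" where
  "subalgebra s B \<longleftrightarrow> module.subspace s B \<and> 1 \<in> B \<and> (\<forall>x\<in>B. \<forall>y\<in>B. x * y \<in> B)"

definition bilinear_form_on :: "('f::field \<Rightarrow> 'm::ring_1 \<Rightarrow> 'm) \<Rightarrow> 'm set \<Rightarrow> ('m \<Rightarrow> 'm \<Rightarrow> 'f) \<Rightarrow> bool" where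
  "bilinear_form_on s B \<beta> \<longleftrightarrow>
     (\<forall>x\<in>B. \<forall>y\<in>B. \<forall>z\<in>B. \<beta> (x + y) z = \<beta> x z + \<beta> y z \<and> \<beta> z (x + y) = \<beta> z x + \<beta> z y) \<and>
     (\<forall>x\<in>B. \<forall>z\<in>B. \<forall>c. \<beta> (s c x) z = c * \<beta> x z \<and> \<beta> z (s c x) = c * \<beta> z x)"

text \<open>Elements of B \<otimes>_F B are represented by finite lists of pairs (sum of x \<otimes> y).
  Two such represent the same tensor iff every F-bilinear form on B x B
  takes the same value on them (B \<otimes>_F B is the vector space whose dual is the
  space of bilinear forms; over a field functionals separate points).\<close>
definition tensor_eq :: "('f::field \<Rightarrow> 'm::ring_1 \<Rightarrow> 'm) \<Rightarrow> 'm set \<Rightarrow> ('m \<times> 'm) list \<Rightarrow> ('m \<times> 'm) list \<Rightarrow> bool" where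
  "tensor_eq s B xs ys \<longleftrightarrow>
     (\<forall>\<beta>. bilinear_form_on s B \<beta> \<longrightarrow>
        (\<Sum>(x, y)\<leftarrow>xs. \<beta> x y) = (\<Sum>(x, y)\<leftarrow>ys. \<beta> x y))"

text \<open>Separating idempotent e = \<Sum> x_i \<otimes> y_i in B \<otimes>_F B: multiplication maps it to 1
  and (b \<otimes> 1) e = e (1 \<otimes> b) for all b in B.\<close>
definition separating_idempotent :: "('f::field \<Rightarrow> 'm::ring_1 \<Rightarrow> 'm) \<Rightarrow> 'm set \<Rightarrow> ('m \<times> 'm) list \<Rightarrow> bool" where
  "separating_idempotent s B e \<longleftrightarrow>
     set e \<subseteq> B \<times> B \<and> (\<Sum>(x, y)\<leftarrow>e. x * y) = 1 \<and>
     (\<forall>b\<in>B. tensor_eq s B (map (\<lambda>(x, y). (b * x, y)) e) (map (\<lambda>(x, y). (x, y * b)) e))"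

definition separable :: "('f::field \<Rightarrow> 'm::ring_1 \<Rightarrow> 'm) \<Rightarrow> 'm set \<Rightarrow> bool" where
  "separable s B \<longleftrightarrow> (\<exists>e. separating_idempotent s B e)"

text \<open>First-order deformation \<phi> : B \<rightarrow> M (only values on B matter).\<close>
definition first_order_deformation :: "('f::field \<Rightarrow> 'm::ring_1 \<Rightarrow> 'm) \<Rightarrow> 'm set \<Rightarrow> ('m \<Rightarrow> 'm) \<Rightarrow> bool" where
  "first_order_deformation s B \<phi> \<longleftrightarrow>
     (\<forall>x\<in>B. \<forall>y\<in>B. \<phi> (x + y) = \<phi> x + \<phi> y) \<and>
     (\<forall>x\<in>B. \<forall>c. \<phi> (s c x) = s c (\<phi> x)) \<and>
     (let \<delta> = (\<lambda>x. \<phi> x - x) in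
       (\<forall>b\<in>B. \<forall>c\<in>B. \<delta> (b * c) = \<delta> b * c + b * \<delta> c) \<and>
       (\<forall>b\<in>B. \<forall>c\<in>B. \<delta> b * \<delta> c = 0))"

definition algebra_automorphism :: "('f::field \<Rightarrow> 'm::ring_1 \<Rightarrow> 'm) \<Rightarrow> ('m \<Rightarrow> 'm) \<Rightarrow> bool" where
  "algebra_automorphism s \<sigma> \<longleftrightarrow> bij \<sigma> \<and> Vector_Spaces.linear s s \<sigma> \<and>
     \<sigma> 1 = 1 \<and> (\<forall>x y. \<sigma> (x * y) = \<sigma> x * \<sigma> y)"

definition center :: "'m::ring_1 set" where
  "center = {z. \<forall>x. z * x = x * z}"

end

theory Submission
  imports Defs
begin

lemma field_vs: "vector_space ((*) :: 'f::field \<Rightarrow> 'f \<Rightarrow> 'f)"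
  by unfold_locales (auto simp: algebra_simps)

lemma separate_point:
  fixes s :: "'f::field \<Rightarrow> 'm::ab_group_add \<Rightarrow> 'm"
  assumes vs: "vector_space s" and v: "v \<noteq> 0"
  shows "\<exists>f. Vector_Spaces.linear s ((*) :: 'f \<Rightarrow> 'f \<Rightarrow> 'f) f \<and> f v = 1"
proof -
  interpret p: vector_space_pair s "(*) :: 'f \<Rightarrow> 'f \<Rightarrow> 'f"
    using vs field_vs unfolding vector_space_pair_def by auto
  have "p.vs1.independent {v}" using v by simp
  from p.linear_independent_extend[OF this, of "\<lambda>_. 1"] show ?thesis by auto
qed

lemma linear_sum_list:
  assumes "Vector_Spaces.linear s t f"
  shows "f (sum_list (map g xs)) = sum_list (map (\<lambda>x. f (g x)) xs)"
proof -
  interpret Vector_Spaces.linear s t f by fact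
  show ?thesis by (induction xs) (auto simp: add)
qed

lemma tensor_eq_apply:
  fixes s :: "'f::field \<Rightarrow> 'm::ring_1 \<Rightarrow> 'm"
  assumes vs: "vector_space s"
    and te: "tensor_eq s B xs ys"
    and add1: "\<And>x y z. x\<in>B \<Longrightarrow> y\<in>B \<Longrightarrow> z\<in>B \<Longrightarrow> g (x + y) z = g x z + g y z"
    and add2: "\<And>x y z. x\<in>B \<Longrightarrow> y\<in>B \<Longrightarrow> z\<in>B \<Longrightarrow> g z (x + y) = g z x + g z y"
    and sc1: "\<And>x z c. x\<in>B \<Longrightarrow> z\<in>B \<Longrightarrow> g (s c x) z = s c (g x z)"
    and sc2: "\<And>x z c. x\<in>B \<Longrightarrow> z\<in>B \<Longrightarrow> g z (s c x) = s c (g z x)"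
  shows "(\<Sum>(x, y)\<leftarrow>xs. g x y) = (\<Sum>(x, y)\<leftarrow>ys. g x y)"
proof (rule ccontr)
  assume ne: "\<not> ?thesis"
  obtain f where f: "Vector_Spaces.linear s ((*) :: 'f \<Rightarrow> 'f \<Rightarrow> 'f) f"
    and fv: "f ((\<Sum>(x, y)\<leftarrow>xs. g x y) - (\<Sum>(x, y)\<leftarrow>ys. g x y)) = 1"
    using separate_point[OF vs] ne by (metis right_minus_eq)
  interpret lf: Vector_Spaces.linear s "(*) :: 'f \<Rightarrow> 'f \<Rightarrow> 'f" f by fact
  have "bilinear_form_on s B (\<lambda>x y. f (g x y))"
    unfolding bilinear_form_on_def
    by (simp add: add1 add2 sc1 sc2 lf.add lf.scale)
  with te have "(\<Sum>(x, y)\<leftarrow>xs. f (g x y)) = (\<Sum>(x, y)\<leftarrow>ys. f (g x y))"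
    unfolding tensor_eq_def by blast
  moreover have "\<And>zs. f (\<Sum>(x, y)\<leftarrow>zs. g x y) = (\<Sum>(x, y)\<leftarrow>zs. f (g x y))"
    using linear_sum_list[OF f] by (simp add: case_prod_unfold)
  ultimately have "f ((\<Sum>(x, y)\<leftarrow>xs. g x y) - (\<Sum>(x, y)\<leftarrow>ys. g x y)) = 0"
    by (simp add: lf.diff)
  with fv show False by simp
qed


lemma sum_list_left:
  fixes c :: "'a::ring_1"
  shows "c * (\<Sum>(x, y)\<leftarrow>e. g x y) = (\<Sum>(x, y)\<leftarrow>e. c * g x y)"
  by (induction e) (auto simp: distrib_left)

lemma sum_list_right:
  fixes c :: "'a::ring_1"
  shows "(\<Sum>(x, y)\<leftarrow>e. g x y) * c = (\<Sum>(x, y)\<leftarrow>e. g x y * c)"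
  by (induction e) (auto simp: distrib_right)

lemma sum_list_zero:
  fixes g :: "_ \<Rightarrow> _ \<Rightarrow> 'a::ring_1"
  assumes "\<And>x y. (x, y) \<in> set e \<Longrightarrow> g x y = 0"
  shows "(\<Sum>(x, y)\<leftarrow>e. g x y) = 0"
  using assms by (induction e) auto

lemma sum_list_plus:
  fixes g :: "_ \<Rightarrow> _ \<Rightarrow> 'a::ring_1"
  shows "(\<Sum>(x, y)\<leftarrow>e. g x y + h x y) = (\<Sum>(x, y)\<leftarrow>e. g x y) + (\<Sum>(x, y)\<leftarrow>e. h x y)"
  by (induction e) (auto simp: algebra_simps)

lemma sum_list_cong:
  fixes g :: "_ \<Rightarrow> _ \<Rightarrow> 'a::ring_1"
  assumes "\<And>x y. (x, y) \<in> set e \<Longrightarrow> g x y = h x y"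
  shows "(\<Sum>(x, y)\<leftarrow>e. g x y) = (\<Sum>(x, y)\<leftarrow>e. h x y)"
  using assms by (induction e) auto

theorem theorem4p6:
  fixes s :: "'f::field \<Rightarrow> 'm::ring_1 \<Rightarrow> 'm"
    and B :: "'m set" and \<phi> :: "'m \<Rightarrow> 'm"
  assumes "algebra_over s"
    and "subalgebra s B"
    and "separable s B"
    and "first_order_deformation s B \<phi>"
  shows "(\<exists>a a'. a * a' = 1 \<and> a' * a = 1 \<and> (\<forall>b\<in>B. \<phi> b = a * b * a'))
    \<and> (\<exists>\<sigma>. algebra_automorphism s \<sigma> \<and> (\<forall>b\<in>B. \<sigma> b = \<phi> b))
    \<and> (\<forall>b\<in>B \<inter> center. \<phi> b = b)"
proof -
  have vs: "vector_space s" and sm1: "\<And>c x y. s c (x * y) = s c x * y"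
    and sm2: "\<And>c x y. s c (x * y) = x * s c y"
    using assms(1) unfolding algebra_over_def by metis+
  interpret vector_space s by (rule vs)
  have Bsub: "subspace B" and B1: "1 \<in> B" and Bmul: "\<And>x y. x \<in> B \<Longrightarrow> y \<in> B \<Longrightarrow> x * y \<in> B"
    using assms(2) unfolding subalgebra_def by auto
  obtain e where eB: "set e \<subseteq> B \<times> B" and e1: "(\<Sum>(x, y)\<leftarrow>e. x * y) = 1"
    and ecomm: "\<And>b. b \<in> B \<Longrightarrow> tensor_eq s B (map (\<lambda>(x, y). (b * x, y)) e) (map (\<lambda>(x, y). (x, y * b)) e)"
    using assms(3) unfolding separable_def separating_idempotent_def by blast
  define \<delta> where "\<delta> x = \<phi> x - x" for x
  have \<phi>add: "\<And>x y. x\<in>B \<Longrightarrow> y\<in>B \<Longrightarrow> \<phi> (x + y) = \<phi> x + \<phi> y"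
    and \<phi>sc: "\<And>x c. x\<in>B \<Longrightarrow> \<phi> (s c x) = s c (\<phi> x)"
    and der: "\<And>b c. b\<in>B \<Longrightarrow> c\<in>B \<Longrightarrow> \<delta> (b * c) = \<delta> b * c + b * \<delta> c"
    and sq: "\<And>b c. b\<in>B \<Longrightarrow> c\<in>B \<Longrightarrow> \<delta> b * \<delta> c = 0"
    using assms(4) unfolding first_order_deformation_def \<delta>_def Let_def by auto
  have \<delta>add: "\<And>x y. x\<in>B \<Longrightarrow> y\<in>B \<Longrightarrow> \<delta> (x + y) = \<delta> x + \<delta> y"
    using \<phi>add unfolding \<delta>_def by (simp add: algebra_simps)
  have \<delta>sc: "\<And>x c. x\<in>B \<Longrightarrow> \<delta> (s c x) = s c (\<delta> x)"
    using \<phi>sc unfolding \<delta>_def by (simp add: scale_right_diff_distrib)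
  have K: "\<delta> y * x * \<delta> z = 0" if "y \<in> B" "x \<in> B" "z \<in> B" for x y z
  proof -
    have "x * \<delta> z = \<delta> (x * z) - \<delta> x * z" using der[OF that(2,3)] by simp
    hence "\<delta> y * x * \<delta> z = \<delta> y * \<delta> (x * z) - \<delta> y * \<delta> x * z"
      by (simp add: mult.assoc right_diff_distrib)
    also have "\<dots> = 0" using sq that Bmul by simp
    finally show ?thesis .
  qed
  define m where "m = (\<Sum>(x, y)\<leftarrow>e. x * \<delta> y)"
  have key: "b * m = m * b + \<delta> b" if b: "b \<in> B" for b
  proof -
    have "b * m = (\<Sum>(x, y)\<leftarrow>map (\<lambda>(x, y). (b * x, y)) e. x * \<delta> y)"
      unfolding m_def sum_list_left by (simp add: case_prod_unfold o_def mult.assoc)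
    also have "\<dots> = (\<Sum>(x, y)\<leftarrow>map (\<lambda>(x, y). (x, y * b)) e. x * \<delta> y)"
      apply (rule tensor_eq_apply[OF vs ecomm[OF b]])
      by (auto simp: \<delta>add \<delta>sc distrib_left distrib_right scale_right_distrib sm1[symmetric] sm2[symmetric])
    also have "\<dots> = (\<Sum>(x, y)\<leftarrow>e. x * \<delta> y * b + x * y * \<delta> b)"
      apply (simp add: case_prod_unfold o_def)
      apply (rule arg_cong[where f=sum_list])
      apply (rule map_cong[OF refl])
      using eB b by (auto simp: der distrib_left mult.assoc)
    also have "\<dots> = m * b + \<delta> b"
      unfolding sum_list_plus m_def sum_list_right[symmetric]
        sum_list_right[where c="\<delta> b" and g="\<lambda>x y. x * y", symmetric] e1 by simp
    finally show ?thesis .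
  qed
  have Z: "\<delta> y * w * m = 0" if "y \<in> B" "w \<in> B" for y w
  proof -
    have "\<delta> y * w * m = (\<Sum>(x, z)\<leftarrow>e. \<delta> y * (w * x) * \<delta> z)"
      unfolding m_def sum_list_left by (simp add: mult.assoc)
    also have "\<dots> = 0"
      by (rule sum_list_zero) (use eB that Bmul K in auto)
    finally show ?thesis .
  qed
  have mbm: "m * b * m = 0" if "b \<in> B" for b
  proof -
    have "m * b * m = (\<Sum>(x, y)\<leftarrow>e. x * (\<delta> y * b * m))"
      unfolding m_def sum_list_right by (simp add: mult.assoc)
    also have "\<dots> = 0"
      by (rule sum_list_zero) (use eB that Z in auto)
    finally show ?thesis .
  qed
  have mm: "m * m = 0" using mbm[OF B1] by simp
  define a where "a = 1 - m"
  define a' where "a' = 1 + m"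
  have aa': "a * a' = 1" and a'a: "a' * a = 1"
    unfolding a_def a'_def using mm by (simp_all add: algebra_simps)
  have conj: "\<phi> b = a * b * a'" if b: "b \<in> B" for b
  proof -
    have "a * b * a' = b + b * m - m * b - m * b * m"
      unfolding a_def a'_def by (simp add: algebra_simps)
    also have "\<dots> = \<phi> b" using key[OF b] mbm[OF b] unfolding \<delta>_def by simp
    finally show ?thesis by simp
  qed
  define \<sigma> where "\<sigma> x = a * x * a'" for x
  have "algebra_automorphism s \<sigma>"
    unfolding algebra_automorphism_def
  proof (intro conjI allI)
    show "bij \<sigma>"
      by (rule o_bij[where g="\<lambda>x. a' * x * a"])
        (auto simp: \<sigma>_def fun_eq_iff, metis aa' a'a mult.assoc mult_1_left mult_1_right,
         metis aa' a'a mult.assoc mult_1_left mult_1_right)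
    show "Vector_Spaces.linear s s \<sigma>"
      unfolding Vector_Spaces.linear_iff using vs
      by (auto simp: \<sigma>_def distrib_left distrib_right sm1[symmetric] sm2[symmetric])
    show "\<sigma> 1 = 1" using aa' by (simp add: \<sigma>_def)
    fix x y
    have "\<sigma> x * \<sigma> y = a * x * (a' * a) * y * a'" by (simp add: \<sigma>_def mult.assoc)
    thus "\<sigma> (x * y) = \<sigma> x * \<sigma> y" using a'a by (simp add: \<sigma>_def mult.assoc)
  qed
  moreover have "\<forall>b\<in>B \<inter> center. \<phi> b = b"
  proof
    fix b assume "b \<in> B \<inter> center"
    hence "b \<in> B" "\<And>x. b * x = x * b" unfolding center_def by auto
    hence "\<phi> b = b * (a * a')" using conj by (metis mult.assoc)
    thus "\<phi> b = b" using aa' by simp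
  qed
  ultimately show ?thesis using aa' a'a conj by (auto simp: \<sigma>_def)
qed

end
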